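(* For plane binary tree shapes $t$ let $S_t$, $T$ be as in the context. Then \[ \sum_{\substack{t \in \mathcal{B}_{\le n}\\ |t| \ge \log_4 n}} \left(1 - \frac{[z^n]S_t(z)}{[z^n]T(z)}\right) = \mathcal{O}\!\left(\frac{n}{\log n}\right) \quad \text{as } n\to\infty . \]
   Context: A plane binary tree is a rooted tree in which each node has a left and a right slot, each empty or holding a subtree; $\mathcal{B}_{\le n}$ is the set of (unlabeled) plane binary trees with at most $n$ nodes, and $|t|$ is the number of nodes. A plane increasing binary tree of size $n$ is a plane binary tree whose $n$ nodes are labeled $1,\dots,n$ increasingly along every path from the root; their exponential generating function is $T(z)=z/(1-z)$, so $[z^n]T(z)=1$. A fringe subtree is a node with all its descendants; its shape is obtained by forgetting labels. For a shape $t$ with $k$ nodes, $\ell(t)$ is its number of increasing labelings (equal to $k!$ divided by the product of the sizes of all fringe subtrees of $t$) and $w(t)=\ell(t)/k!$. $S_t(z)$ is the exponential generating function of plane increasing binary trees having no fringe subtree of shape $t$; it is the power series solution of $S_t'(z)=(1+S_t(z))^2-w(t)kz^{k-1}$, $S_t(0)=0$. *)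

theory Defs
  imports Complex_Main "HOL-Library.Landau_Symbols"
    "HOL-Computational_Algebra.Formal_Power_Series"
begin

text \<open>Plane binary trees (unlabelled shapes): Leaf is an empty slot.\<close>
datatype btree = Leaf | Node btree btree

fun bsize :: "btree \<Rightarrow> nat" where
  "bsize Leaf = 0"
| "bsize (Node l r) = Suc (bsize l + bsize r)"

fun fringe_prod :: "btree \<Rightarrow> nat" where
  "fringe_prod Leaf = 1"
| "fringe_prod (Node l r) = bsize (Node l r) * fringe_prod l * fringe_prod r"

text \<open>Number of increasing labellings: k! divided by the product of fringe subtree sizes.\<close>
definition nlab :: "btree \<Rightarrow> nat" where
  "nlab t = fact (bsize t) div fringe_prod t"

definition wt :: "btree \<Rightarrow> real" where
  "wt t = real (nlab t) / fact (bsize t)"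

text \<open>EGF of plane increasing binary trees.\<close>
definition T_egf :: "real fps" where
  "T_egf = fps_X / (1 - fps_X)"

definition S_egf :: "btree \<Rightarrow> real fps" where
  "S_egf t = (THE S. fps_deriv S = (1 + S)^2 - fps_const (wt t * real (bsize t)) * fps_X ^ (bsize t - 1)
                    \<and> fps_nth S 0 = 0)"

end

theory Submission
  imports Defs
begin

lemma T_nth: "fps_nth T_egf n = (if n = 0 then 0 else 1)"
proof -
  have "T_egf = fps_X * inverse (1 - fps_X)"
    unfolding T_egf_def by (simp add: fps_divide_unit)
  also have "\<dots> = fps_X * Abs_fps (\<lambda>n. 1)" by (simp add: fps_inverse_one_minus_fps_X)
  finally have E: "T_egf = fps_X * Abs_fps (\<lambda>n. 1)" .
  show ?thesis unfolding E by (cases n) simp_all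
qed

definition ind :: "nat \<Rightarrow> real" where "ind i = (if i = 0 then 1 else 0)"

definition G :: "real \<Rightarrow> nat \<Rightarrow> (nat \<Rightarrow> real) \<Rightarrow> nat \<Rightarrow> real" where
  "G c m a n = ((\<Sum>i=0..n. (ind i + a i) * (ind (n-i) + a (n-i))) - (if n = m then c else 0)) / (n+1)"

lemma G_cong: "(\<And>i. i \<le> n \<Longrightarrow> a i = b i) \<Longrightarrow> G c m a n = G c m b n"
  unfolding G_def by (intro arg_cong2[where f="(/)"] arg_cong2[where f="(-)"] sum.cong) auto

function sq :: "real \<Rightarrow> nat \<Rightarrow> nat \<Rightarrow> real" where
  "sq c m 0 = 0"
| "sq c m (Suc n) = ((\<Sum>i=0..n. (ind i + (if i \<le> n then sq c m i else 0)) * (ind (n-i) + (if n-i \<le> n then sq c m (n-i) else 0))) - (if n = m then c else 0)) / (n+1)"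
  by pat_completeness auto
termination by (relation "measure (\<lambda>(c,m,n). n)") auto

lemma sq_Suc: "sq c m (Suc n) = G c m (sq c m) n"
  unfolding G_def sq.simps by (intro arg_cong2[where f="(/)"] arg_cong2[where f="(-)"] sum.cong) auto

lemma eqn_iff:
  "(fps_deriv S = (1 + S)^2 - fps_const c * fps_X ^ m \<and> fps_nth S 0 = 0) \<longleftrightarrow>
   (fps_nth S 0 = 0 \<and> (\<forall>n. fps_nth S (Suc n) = G c m (fps_nth S) n))"
proof -
  have nth1: "fps_nth (1 + S) i = ind i + fps_nth S i" for i
    by (simp add: ind_def)
  have R: "fps_nth ((1 + S)^2 - fps_const c * fps_X ^ m) n =
     (\<Sum>i=0..n. (ind i + fps_nth S i) * (ind (n-i) + fps_nth S (n-i))) - (if n = m then c else 0)" for n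
  proof -
    have a: "fps_nth ((1 + S)^2) n = (\<Sum>i=0..n. (ind i + fps_nth S i) * (ind (n-i) + fps_nth S (n-i)))"
      unfolding power2_eq_square fps_mult_nth nth1 ..
    have b: "fps_nth (fps_const c * fps_X ^ m) n = (if n = m then c else 0)"
      by (simp add: fps_mult_left_const_nth)
    show ?thesis unfolding fps_sub_nth a b ..
  qed
  have "fps_deriv S = (1 + S)^2 - fps_const c * fps_X ^ m \<longleftrightarrow>
        (\<forall>n. fps_nth (fps_deriv S) n = fps_nth ((1 + S)^2 - fps_const c * fps_X ^ m) n)"
    by (simp add: fps_eq_iff)
  also have "\<dots> \<longleftrightarrow> (\<forall>n. fps_nth S (Suc n) = G c m (fps_nth S) n)"
    unfolding R fps_deriv_nth G_def
    by (simp add: eq_divide_eq ac_simps del: of_nat_add)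
  finally show ?thesis by blast
qed

lemma S_egf_eq: "S_egf t = Abs_fps (sq (wt t * real (bsize t)) (bsize t - 1))"
proof -
  define c where "c = wt t * real (bsize t)"
  define m where "m = bsize t - 1"
  define A where "A = Abs_fps (sq c m)"
  have PA: "fps_deriv A = (1 + A)^2 - fps_const c * fps_X ^ m \<and> fps_nth A 0 = 0"
  proof -
    have "fps_nth A = sq c m" by (simp add: A_def fun_eq_iff)
    then show ?thesis unfolding eqn_iff by (simp add: sq_Suc del: sq.simps(2))
  qed
  have uniq: "S = A" if "fps_deriv S = (1 + S)^2 - fps_const c * fps_X ^ m \<and> fps_nth S 0 = 0" for S
  proof -
    from that have h: "fps_nth S 0 = 0" "\<And>n. fps_nth S (Suc n) = G c m (fps_nth S) n"
      unfolding eqn_iff by auto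
    have "fps_nth S n = sq c m n" for n
    proof (induction n rule: less_induct)
      case (less n)
      show ?case
      proof (cases n)
        case 0 then show ?thesis using h by simp
      next
        case (Suc p)
        have "G c m (fps_nth S) p = G c m (sq c m) p"
          by (rule G_cong) (use less Suc in auto)
        then show ?thesis using h Suc sq_Suc by simp
      qed
    qed
    then show ?thesis unfolding A_def by (simp add: fps_eq_iff)
  qed
  have "S_egf t = A"
    unfolding S_egf_def c_def[symmetric] m_def[symmetric]
    using PA uniq by (rule the_equality)
  then show ?thesis unfolding A_def c_def m_def .
qed

lemma d_rec:
  fixes c :: real and m :: nat
  defines "d \<equiv> \<lambda>n. if n = 0 then 0 else 1 - sq c m n"
  shows "real (n+1) * d (Suc n) = (\<Sum>i=0..n. d i + d (n-i) - d i * d (n-i)) + (if n = m then c else 0)"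
proof -
  have e: "ind i + sq c m i = 1 - d i" for i
    by (cases i) (simp_all add: d_def ind_def)
  have "real (n+1) * sq c m (Suc n) = (\<Sum>i=0..n. (1 - d i) * (1 - d (n-i))) - (if n = m then c else 0)"
    unfolding sq_Suc G_def e by (simp add: field_simps)
  also have "(\<Sum>i=0..n. (1 - d i) * (1 - d (n-i))) = (\<Sum>i=0..n. 1 - (d i + d (n-i) - d i * d (n-i)))"
    by (intro sum.cong) (auto simp: algebra_simps)
  also have "\<dots> = real (n+1) - (\<Sum>i=0..n. d i + d (n-i) - d i * d (n-i))"
    by (simp add: sum_subtractf)
  finally show ?thesis by (simp add: d_def algebra_simps)
qed

locale dseq =
  fixes d :: "nat \<Rightarrow> real" and k :: nat and w :: real
  assumes d0: "d 0 = 0" and k1: "k \<ge> 1" and w0: "0 \<le> w" and w1: "w \<le> 1"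
    and rec: "\<And>n. real (n+1) * d (Suc n) = (\<Sum>i=0..n. d i + d (n-i) - d i * d (n-i)) + (if n = k - 1 then w * real k else 0)"
begin

lemma small: "n < k \<Longrightarrow> d n = 0"
proof (induction n rule: less_induct)
  case (less n)
  show ?case
  proof (cases n)
    case 0 then show ?thesis using d0 by simp
  next
    case (Suc p)
    have "(\<Sum>i=0..p. d i + d (p-i) - d i * d (p-i)) = 0"
      by (intro sum.neutral) (use less Suc in auto)
    moreover have "p \<noteq> k - 1" using less Suc by auto
    ultimately have "real (p+1) * d n = 0" using rec[of p] Suc by simp
    then show ?thesis by simp
  qed
qed

lemma at_k: "d k = w"
proof -
  obtain m where m: "k = Suc m" using k1 by (cases k) auto
  have "(\<Sum>i=0..m. d i + d (m-i) - d i * d (m-i)) = 0"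
    by (intro sum.neutral) (use small m in auto)
  then have "real (m+1) * d k = w * real k" using rec[of m] m by simp
  then show ?thesis using m by simp
qed

lemma bounds: "0 \<le> d n \<and> d n \<le> 1"
proof (induction n rule: less_induct)
  case (less n)
  show ?case
  proof (cases n)
    case 0 then show ?thesis using d0 by simp
  next
    case (Suc p)
    show ?thesis
    proof (cases "p = k - 1")
      case True
      then have "n = k" using Suc k1 by simp
      then show ?thesis using at_k w0 w1 by simp
    next
      case False
      have t: "0 \<le> d i + d (p-i) - d i * d (p-i) \<and> d i + d (p-i) - d i * d (p-i) \<le> 1" if "i \<le> p" for i
      proof -
        have a: "0 \<le> d i" "d i \<le> 1" "0 \<le> d (p-i)" "d (p-i) \<le> 1" using less Suc that by auto
        have "0 \<le> d (p-i) * (1 - d i)" using a by simp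
        moreover have "0 \<le> (1 - d (p-i)) * (1 - d i)" using a by simp
        ultimately show ?thesis using a by (simp add: algebra_simps)
      qed
      have "0 \<le> (\<Sum>i=0..p. d i + d (p-i) - d i * d (p-i))"
        by (intro sum_nonneg) (use t in auto)
      moreover have "(\<Sum>i=0..p. d i + d (p-i) - d i * d (p-i)) \<le> (\<Sum>i=0..p. 1)"
        by (intro sum_mono) (use t in auto)
      ultimately have "0 \<le> real (p+1) * d n" "real (p+1) * d n \<le> real (p+1)"
        using rec[of p] Suc False by auto
      moreover have "real (p+1) > 0" by simp
      ultimately show ?thesis
        by (auto simp: zero_le_mult_iff mult_le_cancel_left1 simp del: of_nat_add)
    qed
  qed
qed

lemma step_le: "real (n+1) * d (Suc n) \<le> 2 * (\<Sum>i=0..n. d i) + (if n = k - 1 then w * real k else 0)"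
proof -
  have "(\<Sum>i=0..n. d i + d (n-i) - d i * d (n-i)) \<le> (\<Sum>i=0..n. d i + d (n-i))"
    by (intro sum_mono) (use bounds in auto)
  also have "\<dots> = (\<Sum>i=0..n. d i) + (\<Sum>i=0..n. d (n-i))" by (simp add: sum.distrib)
  also have "(\<Sum>i=0..n. d (n-i)) = (\<Sum>i=0..n. d i)"
    using sum.atLeastAtMost_rev[of d 0 n] by simp
  finally show ?thesis using rec[of n] by simp
qed

definition Q where "Q = real ((k+1)*(k+2))"

lemma Qpos: "Q > 0" unfolding Q_def by (simp only: of_nat_0_less_iff) simp

lemma psum: "n \<ge> k \<Longrightarrow> (\<Sum>i=0..n. d i) \<le> w * real ((n+1)*(n+2)) / Q"
proof (induction n rule: dec_induct)
  case base
  have "(\<Sum>i=0..k. d i) = (\<Sum>i=0..<Suc k. d i)" by (simp add: atLeastLessThanSuc_atLeastAtMost)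
  also have "\<dots> = (\<Sum>i=0..<k. d i) + d k" by simp
  also have "(\<Sum>i=0..<k. d i) = 0" by (intro sum.neutral) (use small in auto)
  finally show ?case using at_k Qpos by (simp add: Q_def)
next
  case (step n)
  have "n \<noteq> k - 1" using step k1 by simp
  then have "real (n+1) * d (Suc n) \<le> 2 * (\<Sum>i=0..n. d i)" using step_le[of n] by simp
  also have "\<dots> \<le> 2 * (w * real ((n+1)*(n+2)) / Q)" using step by simp
  also have "\<dots> = real (n+1) * (2 * w * real (n+2) / Q)" by (simp add: field_simps)
  finally have "d (Suc n) \<le> 2 * w * real (n+2) / Q"
    by (subst (asm) mult_le_cancel_left_pos) auto
  then have "(\<Sum>i=0..Suc n. d i) \<le> w * real ((n+1)*(n+2)) / Q + 2 * w * real (n+2) / Q"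
    using step by simp
  also have "\<dots> = w * real ((Suc n+1)*(Suc n+2)) / Q"
    using Qpos by (simp add: field_simps)
  finally show ?case .
qed

lemma big: "n > k \<Longrightarrow> d n \<le> 2 * w * real (n+1) / Q"
proof -
  assume "n > k"
  then obtain p where p: "n = Suc p" "p \<ge> k" by (cases n) auto
  have "p \<noteq> k - 1" using p k1 by simp
  then have "real (p+1) * d n \<le> 2 * (\<Sum>i=0..p. d i)" using step_le[of p] p by simp
  also have "\<dots> \<le> 2 * (w * real ((p+1)*(p+2)) / Q)" by (intro mult_left_mono psum) (use p in auto)
  also have "\<dots> = real (p+1) * (2 * w * real (n+1) / Q)" using p by (simp add: field_simps)
  finally show ?thesis by (subst (asm) mult_le_cancel_left_pos) auto
qed

end

lemma fp_pos: "fringe_prod t > 0"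
  by (induction t) auto

definition A :: "nat \<Rightarrow> btree set" where "A k = {t. bsize t = k}"

lemma A0: "A 0 = {Leaf}"
  unfolding A_def by (auto elim: bsize.elims)

lemma A_Suc: "A (Suc n) = (\<lambda>(l,r). Node l r) ` (\<Union>i\<in>{0..n}. A i \<times> A (n-i))"
proof (intro equalityI subsetI)
  fix t assume "t \<in> A (Suc n)"
  then obtain l r where t: "t = Node l r" "bsize l + bsize r = n"
    unfolding A_def by (cases t) auto
  then show "t \<in> (\<lambda>(l,r). Node l r) ` (\<Union>i\<in>{0..n}. A i \<times> A (n-i))"
    unfolding A_def by (intro image_eqI[where x="(l,r)"]) auto
qed (auto simp: A_def)

lemma A_fin: "finite (A n)"
proof (induction n rule: less_induct)
  case (less n)
  show ?case
  proof (cases n)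
    case 0 then show ?thesis by (simp add: A0)
  next
    case (Suc p)
    have "finite (\<Union>i\<in>{0..p}. A i \<times> A (p-i))"
      using less Suc by (intro finite_UN_I finite_cartesian_product) auto
    then show ?thesis unfolding Suc A_Suc by simp
  qed
qed

lemma A_sum: "(\<Sum>t\<in>A n. 1 / real (fringe_prod t)) = 1"
proof (induction n rule: less_induct)
  case (less n)
  show ?case
  proof (cases n)
    case 0 then show ?thesis by (simp add: A0)
  next
    case (Suc p)
    have inj: "inj_on (\<lambda>(l,r). Node l r) X" for X by (auto simp: inj_on_def)
    have "(\<Sum>t\<in>A n. 1 / real (fringe_prod t)) =
          (\<Sum>x\<in>(\<Union>i\<in>{0..p}. A i \<times> A (p-i)). 1 / real (fringe_prod (case x of (l,r) \<Rightarrow> Node l r)))"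
      unfolding Suc A_Suc by (subst sum.reindex[OF inj]) (simp add: o_def)
    also have "\<dots> = (\<Sum>i\<in>{0..p}. \<Sum>x\<in>A i \<times> A (p-i). 1 / real (fringe_prod (case x of (l,r) \<Rightarrow> Node l r)))"
      by (rule sum.UNION_disjoint) (simp_all add: A_fin, auto simp: A_def)
    also have "\<dots> = (\<Sum>i\<in>{0..p}. 1 / real (Suc p) * ((\<Sum>l\<in>A i. 1 / real (fringe_prod l)) * (\<Sum>r\<in>A (p-i). 1 / real (fringe_prod r))))"
    proof (intro sum.cong refl)
      fix i assume i: "i \<in> {0..p}"
      have "(\<Sum>x\<in>A i \<times> A (p-i). 1 / real (fringe_prod (case x of (l,r) \<Rightarrow> Node l r)))
          = (\<Sum>l\<in>A i. \<Sum>r\<in>A (p-i). 1 / real (Suc p) * (1 / real (fringe_prod l) * (1 / real (fringe_prod r))))"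
        by (simp only: sum.cartesian_product) (intro sum.cong refl, use i in \<open>auto simp: A_def algebra_simps split: prod.splits\<close>)
      also have "\<dots> = 1 / real (Suc p) * ((\<Sum>l\<in>A i. 1 / real (fringe_prod l)) * (\<Sum>r\<in>A (p-i). 1 / real (fringe_prod r)))"
        unfolding sum_product by (simp only: sum_distrib_left)
      finally show "(\<Sum>x\<in>A i \<times> A (p-i). 1 / real (fringe_prod (case x of (l,r) \<Rightarrow> Node l r))) = \<dots>" .
    qed
    also have "\<dots> = (\<Sum>i\<in>{0..p}. 1 / real (Suc p))"
      by (intro sum.cong refl) (use less Suc in auto)
    also have "\<dots> = 1" by simp
    finally show ?thesis .
  qed
qed

lemma wt_le: "wt t \<le> 1 / real (fringe_prod t)"
proof -
  have fpos: "real (fringe_prod t) > 0" using fp_pos by simp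
  have fa: "(fact (bsize t) :: real) > 0" by simp
  have "nlab t * fringe_prod t \<le> fact (bsize t)"
    unfolding nlab_def by (rule div_times_less_eq_dividend)
  then have "real (nlab t * fringe_prod t) \<le> real (fact (bsize t))"
    by (simp only: of_nat_le_iff)
  then have le: "real (nlab t) * real (fringe_prod t) \<le> fact (bsize t)"
    by (simp only: of_nat_mult of_nat_fact)
  show ?thesis unfolding wt_def
    using le fpos fa by (simp add: divide_simps)
qed
lemma wt_nonneg: "0 \<le> wt t" unfolding wt_def by simp
lemma wt_le1: "wt t \<le> 1"
proof -
  have "1 / real (fringe_prod t) \<le> 1" using fp_pos[of t] by simp
  then show ?thesis using wt_le[of t] by linarith
qed


definition dd :: "btree \<Rightarrow> nat \<Rightarrow> real" where
  "dd t n = (if n = 0 then 0 else 1 - sq (wt t * real (bsize t)) (bsize t - 1) n)"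

lemma F_eq: "n \<ge> 1 \<Longrightarrow> 1 - fps_nth (S_egf t) n / fps_nth T_egf n = dd t n"
  by (simp add: S_egf_eq T_nth dd_def)

lemma bsize_pos: "t \<noteq> Leaf \<Longrightarrow> bsize t \<ge> 1"
  by (cases t) auto

lemma dseq_inst: "t \<noteq> Leaf \<Longrightarrow> dseq (dd t) (bsize t) (wt t)"
  unfolding dseq_def
  using bsize_pos wt_nonneg wt_le1 d_rec[where c="wt t * real (bsize t)" and m="bsize t - 1"]
  by (auto simp: dd_def[abs_def])

definition g :: "nat \<Rightarrow> nat \<Rightarrow> real" where
  "g n k = (if n = k then 1 else 2 * real (n+1) / real ((k+1)*(k+2)))"

lemma g_nonneg: "0 \<le> g n k" unfolding g_def by simp

lemma per_tree:
  assumes t: "t \<noteq> Leaf" and n: "bsize t \<le> n"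
  shows "0 \<le> dd t n \<and> dd t n \<le> 1 / real (fringe_prod t) * g n (bsize t)"
proof -
  interpret dseq "dd t" "bsize t" "wt t" using dseq_inst[OF t] .
  have "0 \<le> dd t n" using bounds by blast
  moreover have "dd t n \<le> 1 / real (fringe_prod t) * g n (bsize t)"
  proof (cases "n = bsize t")
    case True
    then show ?thesis using at_k wt_le[of t] by (simp add: g_def)
  next
    case False
    then have "n > bsize t" using n by simp
    then have "dd t n \<le> 2 * wt t * real (n+1) / Q" by (rule big)
    also have "\<dots> = wt t * (2 * real (n+1) / Q)" by simp
    also have "\<dots> \<le> 1 / real (fringe_prod t) * (2 * real (n+1) / Q)"
      using wt_le[of t] Qpos by (intro mult_right_mono) auto
    finally show ?thesis using False by (simp add: g_def Q_def)
  qed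
  ultimately show ?thesis by blast
qed

lemma telescope: "L \<le> N \<Longrightarrow> (\<Sum>k=L..<N. 1 / real ((k+1)*(k+2))) = 1 / real (L+1) - 1 / real (N+1)"
proof (induction N rule: dec_induct)
  case base then show ?case by simp
next
  case (step N)
  have "(\<Sum>k=L..<Suc N. 1 / real ((k+1)*(k+2))) = (\<Sum>k=L..<N. 1 / real ((k+1)*(k+2))) + 1 / real ((N+1)*(N+2))"
    using step by simp
  also have "\<dots> = 1 / real (L+1) - 1 / real (Suc N+1)"
  proof -
    have x: "real (N+1) > 0" by simp
    have gen: "1 / y - 1 / (y * (y + 1)) = 1 / (y + 1)" if y: "y > 0" for y :: real
    proof -
      have a: "1 / y = (y+1) / (y * (y+1))" using y by simp
      have "1 / y - 1 / (y * (y + 1)) = ((y+1) - 1) / (y * (y+1))"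
        unfolding a by (simp only: diff_divide_distrib)
      also have "\<dots> = 1 / (y+1)" using y by simp
      finally show ?thesis .
    qed
    have "1 / real (N+1) - 1 / (real (N+1) * (real (N+1) + 1)) = 1 / (real (N+1) + 1)"
      using gen[OF x] .
    moreover have "real ((N+1)*(N+2)) = real (N+1) * (real (N+1) + 1)" by (simp add: algebra_simps)
    moreover have "real (Suc N + 1) = real (N+1) + 1" by simp
    ultimately have "1 / real (N+1) - 1 / real ((N+1)*(N+2)) = 1 / real (Suc N + 1)"
      by metis
    then show ?thesis unfolding step.IH by simp
  qed
  finally show ?case .
qed

lemma main_bound:
  assumes n2: "n \<ge> 2"
  shows "0 \<le> (\<Sum>t\<in>{t. t \<noteq> Leaf \<and> bsize t \<le> n \<and> real (bsize t) \<ge> log 4 (real n)}.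
            1 - fps_nth (S_egf t) n / fps_nth T_egf n)
     \<and> (\<Sum>t\<in>{t. t \<noteq> Leaf \<and> bsize t \<le> n \<and> real (bsize t) \<ge> log 4 (real n)}.
            1 - fps_nth (S_egf t) n / fps_nth T_egf n) \<le> 1 + 2 * real (n+1) / log 4 (real n)"
proof -
  define Sn where "Sn = {t. t \<noteq> Leaf \<and> bsize t \<le> n \<and> real (bsize t) \<ge> log 4 (real n)}"
  define K where "K = {k. 1 \<le> k \<and> k \<le> n \<and> real k \<ge> log 4 (real n)}"
  define L where "L = nat \<lceil>log 4 (real n)\<rceil>"
  have logpos: "log 4 (real n) > 0" using n2 by simp
  have logle: "log 4 (real n) \<le> real n"
  proof -
    have l4: "ln (4::real) \<ge> 1" using exp_le by (subst ln_ge_iff) auto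
    have "ln (real n) \<ge> 0" using n2 by simp
    then have "log 4 (real n) \<le> ln (real n)" unfolding log_def using l4
      by (simp add: divide_le_eq mult_le_cancel_left1 mult.commute)
    also have "\<dots> \<le> real n" using n2 by (intro less_imp_le ln_less_self) simp
    finally show ?thesis .
  qed
  have LK: "real L \<ge> log 4 (real n)" unfolding L_def by linarith
  have Ln: "L \<le> n" unfolding L_def using logle by (simp add: nat_le_iff ceiling_le_iff)
  have K_sub: "K \<subseteq> {L..n}"
  proof
    fix k assume "k \<in> K"
    then have "real k \<ge> log 4 (real n)" "k \<le> n" unfolding K_def by auto
    then have "L \<le> k" unfolding L_def by (simp add: nat_le_iff ceiling_le_iff)
    then show "k \<in> {L..n}" using \<open>k \<le> n\<close> by simp
  qed
  have finK: "finite K" unfolding K_def by simp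
  have Sn_sub: "Sn \<subseteq> (\<Union>k\<in>{..n}. A k)" unfolding Sn_def A_def by auto
  have finSn: "finite Sn" by (rule finite_subset[OF Sn_sub]) (auto simp: A_fin)
  have img: "bsize ` Sn \<subseteq> K" unfolding Sn_def K_def using bsize_pos by auto
  have fibre: "{t \<in> Sn. bsize t = k} = A k" if "k \<in> K" for k
    using that unfolding Sn_def K_def A_def by auto
  have Feq: "1 - fps_nth (S_egf t) n / fps_nth T_egf n = dd t n" for t
    using n2 by (intro F_eq) simp
  have pt: "0 \<le> dd t n \<and> dd t n \<le> 1 / real (fringe_prod t) * g n (bsize t)" if "t \<in> Sn" for t
    using that unfolding Sn_def by (intro per_tree) auto
  have nonneg: "0 \<le> (\<Sum>t\<in>Sn. dd t n)" using pt by (intro sum_nonneg) blast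
  have "(\<Sum>t\<in>Sn. dd t n) \<le> (\<Sum>t\<in>Sn. 1 / real (fringe_prod t) * g n (bsize t))"
    using pt by (intro sum_mono) blast
  also have "\<dots> = (\<Sum>k\<in>K. \<Sum>t\<in>{t \<in> Sn. bsize t = k}. 1 / real (fringe_prod t) * g n (bsize t))"
    by (rule sum.group[symmetric, OF finSn finK img])
  also have "\<dots> = (\<Sum>k\<in>K. g n k)"
  proof (intro sum.cong refl)
    fix k assume k: "k \<in> K"
    have "(\<Sum>t\<in>{t \<in> Sn. bsize t = k}. 1 / real (fringe_prod t) * g n (bsize t))
        = (\<Sum>t\<in>A k. 1 / real (fringe_prod t) * g n k)"
      unfolding fibre[OF k] by (intro sum.cong refl) (auto simp: A_def)
    also have "\<dots> = (\<Sum>t\<in>A k. 1 / real (fringe_prod t)) * g n k"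
      by (simp add: sum_distrib_right)
    finally show "(\<Sum>t\<in>{t \<in> Sn. bsize t = k}. 1 / real (fringe_prod t) * g n (bsize t)) = g n k"
      by (simp add: A_sum)
  qed
  also have "\<dots> \<le> (\<Sum>k\<in>{L..n}. g n k)"
    by (rule sum_mono2[OF _ K_sub]) (auto simp: g_nonneg)
  also have "(\<Sum>k\<in>{L..n}. g n k) = (\<Sum>k\<in>{L..<n}. g n k) + g n n"
    using Ln by (simp add: atLeastLessThanSuc_atLeastAtMost[symmetric])
  also have "(\<Sum>k\<in>{L..<n}. g n k) = (\<Sum>k\<in>{L..<n}. 2 * real (n+1) * (1 / real ((k+1)*(k+2))))"
    by (intro sum.cong refl) (auto simp: g_def)
  also have "\<dots> = 2 * real (n+1) * (1 / real (L+1) - 1 / real (n+1))"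
    by (simp only: sum_distrib_left[symmetric] telescope[OF Ln])
  also have "\<dots> \<le> 2 * real (n+1) * (1 / log 4 (real n))"
  proof -
    have "1 / real (L+1) \<le> 1 / log 4 (real n)"
      using LK logpos by (intro divide_left_mono) auto
    moreover have "0 \<le> 1 / real (n+1)" by simp
    ultimately have "1 / real (L+1) - 1 / real (n+1) \<le> 1 / log 4 (real n)" by linarith
    then show ?thesis by (intro mult_left_mono) auto
  qed
  finally have "(\<Sum>t\<in>Sn. dd t n) \<le> 1 + 2 * real (n+1) / log 4 (real n)"
    by (simp add: g_def)
  with nonneg show ?thesis unfolding Sn_def[symmetric] Feq by blast
qed

theorem proposition3p8:
  shows "(\<lambda>n::nat. \<Sum>t\<in>{t. t \<noteq> Leaf \<and> bsize t \<le> n \<and> real (bsize t) \<ge> log 4 (real n)}.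
            1 - fps_nth (S_egf t) n / fps_nth T_egf n)
         \<in> O(\<lambda>n. real n / ln (real n))"
proof (rule bigoI[where c = 9])
  show "\<forall>\<^sub>F n in at_top. norm (\<Sum>t\<in>{t. t \<noteq> Leaf \<and> bsize t \<le> n \<and> real (bsize t) \<ge> log 4 (real n)}.
            1 - fps_nth (S_egf t) n / fps_nth T_egf n) \<le> 9 * norm (real n / ln (real n))"
    unfolding eventually_at_top_linorder
  proof (intro exI[of _ 2] allI impI)
    fix n :: nat assume n2: "n \<ge> 2"
    define f where "f = (\<Sum>t\<in>{t. t \<noteq> Leaf \<and> bsize t \<le> n \<and> real (bsize t) \<ge> log 4 (real n)}.
            1 - fps_nth (S_egf t) n / fps_nth T_egf n)"
    have mb: "0 \<le> f" "f \<le> 1 + 2 * real (n+1) / log 4 (real n)"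
      using main_bound[OF n2] unfolding f_def by auto
    have lnpos: "ln (real n) > 0" using n2 by simp
    have lnle: "ln (real n) \<le> real n" using n2 by (intro ln_le_minus_one [THEN order.trans]) auto
    have ln4: "ln (4::real) \<le> 2"
    proof -
      have "ln (4::real) = ln (2 * 2)" by simp
      also have "\<dots> = 2 * ln 2" by (subst ln_mult) auto
      finally show ?thesis using ln_2_less_1 by simp
    qed
    have ln4pos: "ln (4::real) > 0" by simp
    have "2 * real (n+1) / log 4 (real n) = 2 * real (n+1) * ln 4 / ln (real n)"
      by (simp add: log_def)
    also have "\<dots> \<le> 2 * (2 * real n) * 2 / ln (real n)"
      using n2 lnpos ln4 ln4pos by (intro divide_right_mono mult_mono) auto
    finally have b1: "2 * real (n+1) / log 4 (real n) \<le> 8 * (real n / ln (real n))" by simp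
    have b2: "1 \<le> real n / ln (real n)" using lnle lnpos by simp
    have "norm f \<le> 9 * (real n / ln (real n))" using mb b1 b2 by simp
    moreover have "real n / ln (real n) \<ge> 0" using lnpos by simp
    ultimately show "norm f \<le> 9 * norm (real n / ln (real n))" using lnpos by simp
  qed
qed

end
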